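(* Let $(X,\mathbf h,\Lambda,\widetilde B)$ be a quantum seed, $i\in[1,n]$, and let $X'_i$ be the cluster variable of $\mu_i(X,\mathbf h,\Lambda,\widetilde B)$ in position $i$. For every positive integer $s$, $$(X'_i)^s=V^s_{b^i}\,X(s[-b^i]_+-se_i)\qquad\text{and}\qquad (X'_i)^s=W^s_{b^i}\,X(s[b^i]_+-se_i),$$ where $$V^s_{b^i}=\prod_{k=1}^s\Big(\sum_{l=0}^{d_i}q^{\frac{2k-1}{2}l\tilde d_id_i^{-1}}h_{i,l}\,X(l\beta^i)\Big),\qquad W^s_{b^i}=\prod_{k=1}^s\Big(\sum_{l=0}^{d_i}q^{\frac{1-2k}{2}l\tilde d_id_i^{-1}}h_{i,l}\,X(-l\beta^i)\Big).$$
   Context: Notation: $[a,b]=\{a,a+1,\dots,b\}$; $[x]_+=\max(x,0)$, applied entrywise to vectors; $e_1,\dots,e_m$ is the standard basis of $\mathbb Z^m$. Fix integers $m\ge n\ge 1$. A compatible pair $(\Lambda,\widetilde B)$ consists of an $m\times n$ integer matrix $\widetilde B=(b_{kl})$ and a skew-symmetric $m\times m$ integer matrix $\Lambda$ such that $\Lambda\widetilde B=-\begin{bmatrix}D\\0\end{bmatrix}$ for some $D=\mathrm{diag}(\tilde d_1,\dots,\tilde d_n)$ with all $\tilde d_k\in\mathbb Z_{>0}$. Write $\Lambda(a,b)=a^T\Lambda b$. Fix positive integers $d_1,\dots,d_n$ such that $d_k$ divides every entry of the $k$-th column $b^k$ of $\widetilde B$; $\beta^k=\frac1{d_k}b^k$.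 The quantum torus $\mathcal T(\Lambda)$ is the $\mathbb Z[q^{\pm1/2}]$-algebra with basis $\{X(c)\mid c\in\mathbb Z^m\}$ and multiplication $X(c)X(d)=q^{\frac12\Lambda(c,d)}X(c+d)$; $\mathcal F$ is its skew field of fractions, $X_k=X(e_k)$. For $k\in[1,n]$, $\mathbf h_k=(h_{k,0},\dots,h_{k,d_k})$ with $h_{k,r}\in\mathbb Z[q^{\pm1/2}]$, $h_{k,r}=h_{k,d_k-r}$, $h_{k,0}=h_{k,d_k}=1$. A quantum seed $(X,\mathbf h,\Lambda,\widetilde B)$ consists of these data and the map $X:c\mapsto X(c)$. Its mutation in direction $i$ has cluster variables $X'_k=X_k$ for $k\ne i$ and $X'_i=\sum_{r=0}^{d_i}h_{i,r}X(r[\beta^i]_++(d_i-r)[-\beta^i]_+-e_i)$. *)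

theory Defs
  imports Main "HOL-Library.Poly_Mapping"
begin

text \<open>Coefficient ring Z[q^{1/2}, q^{-1/2}]: Laurent polynomials in t = q^{1/2},
  realised as the group ring of (int,+) over int.  tpow a = t^a = q^{a/2}.\<close>
type_synonym lpoly = "int \<Rightarrow>\<^sub>0 int"

definition tpow :: "int \<Rightarrow> lpoly" where
  "tpow a = Poly_Mapping.single a 1"

text \<open>Integer vectors in Z^m are functions nat => int supported on {1..m}.\<close>
type_synonym vec = "nat \<Rightarrow> int"

definition unitv :: "nat \<Rightarrow> vec" where
  "unitv i = (\<lambda>k. if k = i then 1 else 0)"

definition vadd :: "vec \<Rightarrow> vec \<Rightarrow> vec" where
  "vadd c d = (\<lambda>k. c k + d k)"

definition vsub :: "vec \<Rightarrow> vec \<Rightarrow> vec" where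
  "vsub c d = (\<lambda>k. c k - d k)"

definition vsmult :: "int \<Rightarrow> vec \<Rightarrow> vec" where
  "vsmult a c = (\<lambda>k. a * c k)"

definition vneg :: "vec \<Rightarrow> vec" where
  "vneg c = (\<lambda>k. - c k)"

definition vpos :: "vec \<Rightarrow> vec" where
  "vpos c = (\<lambda>k. max (c k) 0)"

definition col :: "nat \<Rightarrow> (nat \<Rightarrow> nat \<Rightarrow> int) \<Rightarrow> nat \<Rightarrow> vec" where
  "col m B l = (\<lambda>k. if k \<in> {1..m} then B k l else 0)"

definition betav :: "nat \<Rightarrow> (nat \<Rightarrow> nat \<Rightarrow> int) \<Rightarrow> (nat \<Rightarrow> nat) \<Rightarrow> nat \<Rightarrow> vec" where
  "betav m B d l = (\<lambda>k. if k \<in> {1..m} then B k l div int (d l) else 0)"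

definition bil :: "nat \<Rightarrow> (nat \<Rightarrow> nat \<Rightarrow> int) \<Rightarrow> vec \<Rightarrow> vec \<Rightarrow> int" where
  "bil m L c d = (\<Sum>k\<in>{1..m}. \<Sum>l\<in>{1..m}. c k * L k l * d l)"

text \<open>Elements of the quantum torus T(Lambda): finite Z[q^{\<plusminus>1/2}]-linear combinations
  of the basis elements X(c), c in Z^m.\<close>
type_synonym qt = "vec \<Rightarrow>\<^sub>0 lpoly"

definition qX :: "vec \<Rightarrow> qt" where
  "qX c = Poly_Mapping.single c 1"

definition qscale :: "lpoly \<Rightarrow> qt \<Rightarrow> qt" where
  "qscale a f = (\<Sum>c\<in>Poly_Mapping.keys f. Poly_Mapping.single c (a * Poly_Mapping.lookup f c))"

text \<open>Multiplication of T(Lambda): X(c) X(d) = q^{Lambda(c,d)/2} X(c+d), extended bilinearly.\<close>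
definition qmult :: "nat \<Rightarrow> (nat \<Rightarrow> nat \<Rightarrow> int) \<Rightarrow> qt \<Rightarrow> qt \<Rightarrow> qt" where
  "qmult m L f g = (\<Sum>c\<in>Poly_Mapping.keys f. \<Sum>d\<in>Poly_Mapping.keys g.
      Poly_Mapping.single (vadd c d) (Poly_Mapping.lookup f c * Poly_Mapping.lookup g d * tpow (bil m L c d)))"

primrec qpow :: "nat \<Rightarrow> (nat \<Rightarrow> nat \<Rightarrow> int) \<Rightarrow> qt \<Rightarrow> nat \<Rightarrow> qt" where
  "qpow m L f 0 = qX (\<lambda>_. 0)"
| "qpow m L f (Suc s) = qmult m L (qpow m L f s) f"

primrec qprod :: "nat \<Rightarrow> (nat \<Rightarrow> nat \<Rightarrow> int) \<Rightarrow> (nat \<Rightarrow> qt) \<Rightarrow> nat \<Rightarrow> qt" where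
  "qprod m L A 0 = qX (\<lambda>_. 0)"
| "qprod m L A (Suc s) = qmult m L (qprod m L A s) (A (Suc s))"

definition compatible_pair ::
  "nat \<Rightarrow> nat \<Rightarrow> (nat \<Rightarrow> nat \<Rightarrow> int) \<Rightarrow> (nat \<Rightarrow> nat \<Rightarrow> int) \<Rightarrow> (nat \<Rightarrow> int) \<Rightarrow> bool" where
  "compatible_pair m n L B dt \<longleftrightarrow>
     (\<forall>k\<in>{1..m}. \<forall>l\<in>{1..m}. L k l = - L l k) \<and>
     (\<forall>k\<in>{1..n}. dt k > 0) \<and>
     (\<forall>k\<in>{1..m}. \<forall>l\<in>{1..n}. (\<Sum>j\<in>{1..m}. L k j * B j l) = (if k = l then - dt l else 0))"

definition quantum_seed ::
  "nat \<Rightarrow> nat \<Rightarrow> (nat \<Rightarrow> nat \<Rightarrow> int) \<Rightarrow> (nat \<Rightarrow> nat \<Rightarrow> int) \<Rightarrow> (nat \<Rightarrow> int)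
    \<Rightarrow> (nat \<Rightarrow> nat) \<Rightarrow> (nat \<Rightarrow> nat \<Rightarrow> lpoly) \<Rightarrow> bool" where
  "quantum_seed m n L B dt d h \<longleftrightarrow>
     1 \<le> n \<and> n \<le> m \<and> compatible_pair m n L B dt \<and>
     (\<forall>k\<in>{1..n}. d k > 0 \<and> (\<forall>j\<in>{1..m}. int (d k) dvd B j k)) \<and>
     (\<forall>k\<in>{1..n}. h k 0 = 1 \<and> h k (d k) = 1 \<and> (\<forall>r\<in>{0..d k}. h k r = h k (d k - r)))"

definition mut_var ::
  "nat \<Rightarrow> (nat \<Rightarrow> nat \<Rightarrow> int) \<Rightarrow> (nat \<Rightarrow> nat) \<Rightarrow> (nat \<Rightarrow> nat \<Rightarrow> lpoly) \<Rightarrow> nat \<Rightarrow> qt" where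
  "mut_var m B d h i = (\<Sum>r\<in>{0..d i}. qscale (h i r)
      (qX (vsub (vadd (vsmult (int r) (vpos (betav m B d i)))
                      (vsmult (int (d i - r)) (vpos (vneg (betav m B d i))))) (unitv i))))"

text \<open>V^s_{b^i} and W^s_{b^i}.  The exponent of q is ((2k-1)/2) l dt_i / d_i, i.e. the exponent
  of t = q^{1/2} is (2k-1) l (dt_i / d_i); dt_i / d_i is an integer under the hypotheses.\<close>
definition Vfac :: "nat \<Rightarrow> (nat \<Rightarrow> nat \<Rightarrow> int) \<Rightarrow> (nat \<Rightarrow> int) \<Rightarrow> (nat \<Rightarrow> nat)
    \<Rightarrow> (nat \<Rightarrow> nat \<Rightarrow> lpoly) \<Rightarrow> nat \<Rightarrow> nat \<Rightarrow> qt" where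
  "Vfac m B dt d h i k = (\<Sum>l\<in>{0..d i}.
     qscale (tpow ((2 * int k - 1) * int l * (dt i div int (d i))) * h i l)
            (qX (vsmult (int l) (betav m B d i))))"

definition Wfac :: "nat \<Rightarrow> (nat \<Rightarrow> nat \<Rightarrow> int) \<Rightarrow> (nat \<Rightarrow> int) \<Rightarrow> (nat \<Rightarrow> nat)
    \<Rightarrow> (nat \<Rightarrow> nat \<Rightarrow> lpoly) \<Rightarrow> nat \<Rightarrow> nat \<Rightarrow> qt" where
  "Wfac m B dt d h i k = (\<Sum>l\<in>{0..d i}.
     qscale (tpow ((1 - 2 * int k) * int l * (dt i div int (d i))) * h i l)
            (qX (vsmult (- int l) (betav m B d i))))"

definition Vs :: "nat \<Rightarrow> (nat \<Rightarrow> nat \<Rightarrow> int) \<Rightarrow> (nat \<Rightarrow> nat \<Rightarrow> int) \<Rightarrow> (nat \<Rightarrow> int) \<Rightarrow> (nat \<Rightarrow> nat)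
    \<Rightarrow> (nat \<Rightarrow> nat \<Rightarrow> lpoly) \<Rightarrow> nat \<Rightarrow> nat \<Rightarrow> qt" where
  "Vs m L B dt d h i s = qprod m L (Vfac m B dt d h i) s"

definition Ws :: "nat \<Rightarrow> (nat \<Rightarrow> nat \<Rightarrow> int) \<Rightarrow> (nat \<Rightarrow> nat \<Rightarrow> int) \<Rightarrow> (nat \<Rightarrow> int) \<Rightarrow> (nat \<Rightarrow> nat)
    \<Rightarrow> (nat \<Rightarrow> nat \<Rightarrow> lpoly) \<Rightarrow> nat \<Rightarrow> nat \<Rightarrow> qt" where
  "Ws m L B dt d h i s = qprod m L (Wfac m B dt d h i) s"

end

theory Submission
  imports Defs
begin


lemma tpow_add: "tpow a * tpow b = tpow (a + b)"
  by (simp add: tpow_def mult_single)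

lemma tpow_0: "tpow 0 = 1"
  by (simp add: tpow_def)

lemma qmult_alt:
  assumes "finite S" "Poly_Mapping.keys f \<subseteq> S" "finite T" "Poly_Mapping.keys g \<subseteq> T"
  shows "qmult m L f g = (\<Sum>c\<in>S. \<Sum>d\<in>T. Poly_Mapping.single (vadd c d)
      (Poly_Mapping.lookup f c * Poly_Mapping.lookup g d * tpow (bil m L c d)))"
proof -
  have "qmult m L f g = (\<Sum>c\<in>S. \<Sum>d\<in>Poly_Mapping.keys g. Poly_Mapping.single (vadd c d)
      (Poly_Mapping.lookup f c * Poly_Mapping.lookup g d * tpow (bil m L c d)))"
    unfolding qmult_def
    by (rule sum.mono_neutral_left) (use assms in \<open>auto simp: in_keys_iff\<close>)
  also have "\<dots> = (\<Sum>c\<in>S. \<Sum>d\<in>T. Poly_Mapping.single (vadd c d)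
      (Poly_Mapping.lookup f c * Poly_Mapping.lookup g d * tpow (bil m L c d)))"
    by (rule sum.cong[OF refl], rule sum.mono_neutral_left) (use assms in \<open>auto simp: in_keys_iff\<close>)
  finally show ?thesis .
qed

lemma qmult_add_left: "qmult m L (f + g) h = qmult m L f h + qmult m L g h"
proof -
  let ?S = "Poly_Mapping.keys f \<union> Poly_Mapping.keys g"
  have "qmult m L (f + g) h = (\<Sum>c\<in>?S. \<Sum>d\<in>Poly_Mapping.keys h. Poly_Mapping.single (vadd c d)
      (Poly_Mapping.lookup (f+g) c * Poly_Mapping.lookup h d * tpow (bil m L c d)))"
    by (rule qmult_alt) (auto simp: keys_add)
  also have "\<dots> = qmult m L f h + qmult m L g h"
    by (simp add: qmult_alt[of ?S f "Poly_Mapping.keys h" h] qmult_alt[of ?S g "Poly_Mapping.keys h" h] lookup_add distrib_right single_add sum.distrib)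
  finally show ?thesis .
qed

lemma qmult_add_right: "qmult m L h (f + g) = qmult m L h f + qmult m L h g"
proof -
  let ?S = "Poly_Mapping.keys f \<union> Poly_Mapping.keys g"
  have "qmult m L h (f + g) = (\<Sum>c\<in>Poly_Mapping.keys h. \<Sum>d\<in>?S. Poly_Mapping.single (vadd c d)
      (Poly_Mapping.lookup h c * Poly_Mapping.lookup (f+g) d * tpow (bil m L c d)))"
    by (rule qmult_alt) (auto simp: keys_add)
  also have "\<dots> = qmult m L h f + qmult m L h g"
    by (simp add: qmult_alt[of "Poly_Mapping.keys h" h ?S f] qmult_alt[of "Poly_Mapping.keys h" h ?S g] lookup_add distrib_right distrib_left single_add sum.distrib)
  finally show ?thesis .
qed

lemma qmult_zero_left: "qmult m L 0 h = 0" by (simp add: qmult_def)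
lemma qmult_zero_right: "qmult m L h 0 = 0" by (simp add: qmult_def)

lemma qmult_sum_left: "qmult m L (\<Sum>i\<in>I. F i) g = (\<Sum>i\<in>I. qmult m L (F i) g)"
  by (induction I rule: infinite_finite_induct) (auto simp: qmult_zero_left qmult_add_left)

lemma qmult_sum_right: "qmult m L g (\<Sum>i\<in>I. F i) = (\<Sum>i\<in>I. qmult m L g (F i))"
  by (induction I rule: infinite_finite_induct) (auto simp: qmult_zero_right qmult_add_right)

lemma qmult_single_left: "qmult m L (Poly_Mapping.single p a) h =
   (\<Sum>e\<in>Poly_Mapping.keys h. Poly_Mapping.single (vadd p e) (a * Poly_Mapping.lookup h e * tpow (bil m L p e)))"
  by (subst qmult_alt[of "{p}" _ "Poly_Mapping.keys h"]) auto

lemma qmult_single_right: "qmult m L h (Poly_Mapping.single p a) =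
   (\<Sum>e\<in>Poly_Mapping.keys h. Poly_Mapping.single (vadd e p) (Poly_Mapping.lookup h e * a * tpow (bil m L e p)))"
  by (subst qmult_alt[of "Poly_Mapping.keys h" _ "{p}"]) auto

lemma qmult_single_single: "qmult m L (Poly_Mapping.single p a) (Poly_Mapping.single q b) =
   Poly_Mapping.single (vadd p q) (a * b * tpow (bil m L p q))"
  by (subst qmult_alt[of "{p}" _ "{q}"]) auto

lemma qscale_qX: "qscale a (qX c) = Poly_Mapping.single c a"
  by (simp add: qscale_def qX_def)

lemma bil_add_left: "bil m L (vadd a b) c = bil m L a c + bil m L b c"
  by (simp add: bil_def vadd_def algebra_simps sum.distrib)
lemma bil_add_right: "bil m L c (vadd a b) = bil m L c a + bil m L c b"
  by (simp add: bil_def vadd_def algebra_simps sum.distrib)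
lemma bil_smult_left: "bil m L (vsmult k a) c = k * bil m L a c"
  by (simp add: bil_def vsmult_def algebra_simps sum_distrib_left)
lemma bil_smult_right: "bil m L c (vsmult k a) = k * bil m L c a"
  by (simp add: bil_def vsmult_def algebra_simps sum_distrib_left)

lemma vadd_comm: "vadd a b = vadd b a"
  by (simp add: vadd_def add.commute)

lemma vadd_assoc: "vadd (vadd a b) c = vadd a (vadd b c)"
  by (simp add: vadd_def add.assoc)

lemma qmult_assoc: "qmult m L (qmult m L f g) h = qmult m L f (qmult m L g h)"
proof -
  have "qmult m L (qmult m L f g) h = (\<Sum>c\<in>Poly_Mapping.keys f. \<Sum>d\<in>Poly_Mapping.keys g. \<Sum>e\<in>Poly_Mapping.keys h.
     Poly_Mapping.single (vadd (vadd c d) e) (Poly_Mapping.lookup f c * Poly_Mapping.lookup g d * tpow (bil m L c d)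
        * Poly_Mapping.lookup h e * tpow (bil m L (vadd c d) e)))"
    by (simp add: qmult_def[of m L f g] qmult_sum_left qmult_single_left)
  also have "\<dots> = (\<Sum>c\<in>Poly_Mapping.keys f. \<Sum>d\<in>Poly_Mapping.keys g. \<Sum>e\<in>Poly_Mapping.keys h.
     Poly_Mapping.single (vadd c (vadd d e)) (Poly_Mapping.lookup f c * (Poly_Mapping.lookup g d * Poly_Mapping.lookup h e * tpow (bil m L d e))
        * tpow (bil m L c (vadd d e))))"
    by (intro sum.cong refl) (simp add: vadd_assoc bil_add_left bil_add_right mult_ac add_ac tpow_add)
  also have "\<dots> = (\<Sum>d\<in>Poly_Mapping.keys g. \<Sum>e\<in>Poly_Mapping.keys h. \<Sum>c\<in>Poly_Mapping.keys f.
     Poly_Mapping.single (vadd c (vadd d e)) (Poly_Mapping.lookup f c * (Poly_Mapping.lookup g d * Poly_Mapping.lookup h e * tpow (bil m L d e))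
        * tpow (bil m L c (vadd d e))))"
    apply (rule trans[OF sum.swap])
    apply (rule sum.cong[OF refl])
    apply (rule sum.swap)
    done
  also have "\<dots> = qmult m L f (qmult m L g h)"
    by (simp add: qmult_def[of m L g h] qmult_sum_right qmult_single_right)
  finally show ?thesis .
qed

lemma bil_zero_left: "bil m L (\<lambda>_. 0) c = 0" by (simp add: bil_def)

lemma qpow_general:
  assumes mut: "X' = qmult m L (F 1) (qX v)"
    and comm: "\<And>s. qmult m L (qX (vsmult (int s) v)) (F 1) = qmult m L (F (Suc s)) (qX (vsmult (int s) v))"
    and vv: "bil m L v v = 0"
  shows "qpow m L X' s = qmult m L (qprod m L F s) (qX (vsmult (int s) v))"
proof (induction s)
  case 0
  have "vsmult (int 0) v = (\<lambda>_. 0)" by (simp add: vsmult_def)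
  then show ?case
    by (simp add: qX_def qmult_single_single bil_zero_left tpow_0 vadd_def)
next
  case (Suc s)
  have vs: "qmult m L (qX (vsmult (int s) v)) (qX v) = qX (vsmult (int (Suc s)) v)"
  proof -
    have "vadd (vsmult (int s) v) v = vsmult (int (Suc s)) v"
      by (simp add: vadd_def vsmult_def algebra_simps)
    then show ?thesis by (simp add: qX_def qmult_single_single bil_smult_left vv tpow_0)
  qed
  have "qpow m L X' (Suc s) = qmult m L (qmult m L (qprod m L F s) (qX (vsmult (int s) v))) (qmult m L (F 1) (qX v))"
    using Suc mut by simp
  also have "\<dots> = qmult m L (qprod m L F s) (qmult m L (qmult m L (qX (vsmult (int s) v)) (F 1)) (qX v))"
    by (simp add: qmult_assoc)
  also have "\<dots> = qmult m L (qprod m L F s) (qmult m L (F (Suc s)) (qmult m L (qX (vsmult (int s) v)) (qX v)))"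
    by (subst comm) (simp only: qmult_assoc)
  also have "\<dots> = qmult m L (qprod m L F (Suc s)) (qX (vsmult (int (Suc s)) v))"
    by (simp add: vs qmult_assoc)
  finally show ?case .
qed

lemma bil_skew:
  assumes sk: "\<forall>k\<in>{1..m}. \<forall>l\<in>{1..m}. L k l = - L l k"
  shows "bil m L a c = - bil m L c a"
proof -
  have "bil m L a c = (\<Sum>l\<in>{1..m}. \<Sum>k\<in>{1..m}. a k * L k l * c l)"
    unfolding bil_def by (rule sum.swap)
  also have "\<dots> = (\<Sum>l\<in>{1..m}. \<Sum>k\<in>{1..m}. - (c l * L l k * a k))"
  proof (intro sum.cong refl)
    fix l k assume "l \<in> {1..m}" "k \<in> {1..m}"
    then have "L k l = - L l k" using sk by blast
    then show "a k * L k l * c l = - (c l * L l k * a k)" by simp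
  qed
  also have "\<dots> = - bil m L c a"
    by (simp add: bil_def sum_negf)
  finally show ?thesis .
qed



lemma bil_col:
  assumes cp: "compatible_pair m n L B dt" and i: "i \<in> {1..n}" and nm: "n \<le> m"
  shows "bil m L (col m B i) w = dt i * w i"
proof -
  have sk: "\<forall>k\<in>{1..m}. \<forall>l\<in>{1..m}. L k l = - L l k"
    using cp unfolding compatible_pair_def by (rule conjunct1)
  have eq: "\<forall>k\<in>{1..m}. \<forall>l\<in>{1..n}. (\<Sum>j\<in>{1..m}. L k j * B j l) = (if k = l then - dt l else 0)"
    using cp unfolding compatible_pair_def by (rule conjunct2[OF conjunct2])
  have im: "i \<in> {1..m}" using i nm by auto
  have "bil m L (col m B i) w = (\<Sum>k\<in>{1..m}. \<Sum>l\<in>{1..m}. B k i * L k l * w l)"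
    unfolding bil_def col_def by (intro sum.cong refl) (simp only: if_P)
  also have "\<dots> = (\<Sum>l\<in>{1..m}. \<Sum>k\<in>{1..m}. B k i * L k l * w l)"
    by (rule sum.swap)
  also have "\<dots> = (\<Sum>l\<in>{1..m}. - w l * (\<Sum>k\<in>{1..m}. L l k * B k i))"
  proof (rule sum.cong[OF refl])
    fix l assume l: "l \<in> {1..m}"
    have "(\<Sum>k\<in>{1..m}. B k i * L k l * w l) = (\<Sum>k\<in>{1..m}. - (w l * (L l k * B k i)))"
    proof (rule sum.cong[OF refl])
      fix k assume "k \<in> {1..m}"
      then have "L k l = - L l k" using sk l by blast
      then show "B k i * L k l * w l = - (w l * (L l k * B k i))" by simp
    qed
    also have "\<dots> = - w l * (\<Sum>k\<in>{1..m}. L l k * B k i)"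
      by (simp add: sum_negf sum_distrib_left)
    finally show "(\<Sum>k\<in>{1..m}. B k i * L k l * w l) = - w l * (\<Sum>k\<in>{1..m}. L l k * B k i)" .
  qed
  also have "\<dots> = (\<Sum>l\<in>{1..m}. (if l = i then dt i * w i else 0))"
  proof (rule sum.cong[OF refl])
    fix l assume l: "l \<in> {1..m}"
    have "(\<Sum>k\<in>{1..m}. L l k * B k i) = (if l = i then - dt i else 0)"
      using eq l i by blast
    then show "- w l * (\<Sum>k\<in>{1..m}. L l k * B k i) = (if l = i then dt i * w i else 0)"
      by simp
  qed
  also have "\<dots> = dt i * w i" using im by simp
  finally show ?thesis .
qed



lemma maxV: "(0::int) \<le> r \<Longrightarrow> r \<le> D \<Longrightarrow> r * max x 0 + (D - r) * max (-x) 0 = r*x + max (-(D*x)) 0"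
proof (cases "x \<ge> 0")
  case True
  assume "0 \<le> r" "r \<le> D"
  then have "D * x \<ge> 0" using True by simp
  then show ?thesis using True by (simp add: max_def)
next
  case False
  assume "0 \<le> r" "r \<le> D"
  then have "D * x \<le> 0" using False by (simp add: mult_nonneg_nonpos)
  then show ?thesis using False by (simp add: max_def algebra_simps)
qed

lemma maxW: "(0::int) \<le> l \<Longrightarrow> l \<le> D \<Longrightarrow> (D - l) * max x 0 + l * max (-x) 0 = -l*x + max (D*x) 0"
proof (cases "x \<ge> 0")
  case True
  assume "0 \<le> l" "l \<le> D"
  then have "D * x \<ge> 0" using True by simp
  then show ?thesis using True by (simp add: max_def algebra_simps)
next
  case False
  assume "0 \<le> l" "l \<le> D"
  then have "D * x \<le> 0" using False by (simp add: mult_nonneg_nonpos)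
  then show ?thesis using False by (simp add: max_def algebra_simps)
qed

theorem lemma4p1:
  fixes m n :: nat and L B :: "nat \<Rightarrow> nat \<Rightarrow> int" and dt :: "nat \<Rightarrow> int"
    and d :: "nat \<Rightarrow> nat" and h :: "nat \<Rightarrow> nat \<Rightarrow> lpoly" and i s :: nat
  assumes "quantum_seed m n L B dt d h"
    and "i \<in> {1..n}"
    and "s \<ge> 1"
  shows "qpow m L (mut_var m B d h i) s
           = qmult m L (Vs m L B dt d h i s)
               (qX (vsub (vsmult (int s) (vpos (vneg (col m B i)))) (vsmult (int s) (unitv i))))
       \<and> qpow m L (mut_var m B d h i) s
           = qmult m L (Ws m L B dt d h i s)
               (qX (vsub (vsmult (int s) (vpos (col m B i))) (vsmult (int s) (unitv i))))"
proof -
  note qs = assms(1)[unfolded quantum_seed_def]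
  have nm: "n \<le> m" using qs by blast
  have cp: "compatible_pair m n L B dt" using qs by blast
  have iin: "i \<in> {1..n}" by fact
  have im: "i \<in> {1..m}" using iin nm by auto
  have sk: "\<forall>k\<in>{1..m}. \<forall>l\<in>{1..m}. L k l = - L l k"
    using cp unfolding compatible_pair_def by (rule conjunct1)
  have dtpos: "dt i > 0" using cp iin unfolding compatible_pair_def by blast
  have dpos: "d i > 0" and dvd: "\<forall>j\<in>{1..m}. int (d i) dvd B j i"
    using qs iin by blast+
  have hsym: "\<forall>r\<in>{0..d i}. h i r = h i (d i - r)" using qs iin by blast
  define D where "D = d i"
  define \<beta> where "\<beta> = betav m B d i"
  define b where "b = col m B i"
  define c where "c = dt i div int (d i)"
  define v where "v = vsub (vpos (vneg b)) (unitv i)"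
  define u where "u = vsub (vpos b) (unitv i)"
  have colb: "b = vsmult (int D) \<beta>"
  proof
    fix k show "b k = vsmult (int D) \<beta> k"
      using dvd by (cases "k \<in> {1..m}") (auto simp: b_def col_def vsmult_def \<beta>_def betav_def D_def)
  qed
  have bilb: "\<And>w. bil m L b w = dt i * w i" unfolding b_def by (rule bil_col[OF cp iin nm])
  have bii: "b i = 0"
  proof -
    have "bil m L b b = - bil m L b b" by (rule bil_skew[OF sk])
    then have "bil m L b b = 0" by simp
    then show ?thesis using bilb[of b] dtpos by simp
  qed
  have dtc: "dt i = int D * c \<and> c = bil m L \<beta> (unitv i)"
  proof -
    have "dt i = bil m L b (unitv i)" using bilb[of "unitv i"] by (simp add: unitv_def)
    also have "\<dots> = int D * bil m L \<beta> (unitv i)" by (simp add: colb bil_smult_left)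
    finally have e: "dt i = int D * bil m L \<beta> (unitv i)" .
    then have "c = bil m L \<beta> (unitv i)" using dpos by (simp add: c_def D_def)
    with e show ?thesis by simp
  qed
  have bv: "bil m L \<beta> v = - c"
  proof -
    have "int D * bil m L \<beta> v = bil m L b v" by (simp add: colb bil_smult_left)
    also have "\<dots> = - dt i" using bilb[of v] bii by (simp add: v_def vsub_def vpos_def vneg_def unitv_def)
    finally have "int D * bil m L \<beta> v = int D * (- c)" using dtc by simp
    moreover have "int D \<noteq> 0" using dpos D_def by simp
    ultimately show ?thesis by (metis mult_left_cancel)
  qed
  have bu: "bil m L \<beta> u = - c"
  proof -
    have "int D * bil m L \<beta> u = bil m L b u" by (simp add: colb bil_smult_left)
    also have "\<dots> = - dt i" using bilb[of u] bii by (simp add: u_def vsub_def vpos_def vneg_def unitv_def)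
    finally have "int D * bil m L \<beta> u = int D * (- c)" using dtc by simp
    moreover have "int D \<noteq> 0" using dpos D_def by simp
    ultimately show ?thesis by (metis mult_left_cancel)
  qed
  have mutS: "mut_var m B d h i = (\<Sum>r\<in>{0..D}. Poly_Mapping.single
      (vsub (vadd (vsmult (int r) (vpos \<beta>)) (vsmult (int (D - r)) (vpos (vneg \<beta>)))) (unitv i)) (h i r))"
    by (simp add: mut_var_def qscale_qX D_def \<beta>_def)
  have VfS: "\<And>k. Vfac m B dt d h i k = (\<Sum>l\<in>{0..D}. Poly_Mapping.single (vsmult (int l) \<beta>)
      (tpow ((2 * int k - 1) * int l * c) * h i l))"
    by (simp add: Vfac_def qscale_qX D_def \<beta>_def c_def)
  have WfS: "\<And>k. Wfac m B dt d h i k = (\<Sum>l\<in>{0..D}. Poly_Mapping.single (vsmult (- int l) \<beta>)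
      (tpow ((1 - 2 * int k) * int l * c) * h i l))"
    by (simp add: Wfac_def qscale_qX D_def \<beta>_def c_def)
  have vv: "bil m L v v = 0" using bil_skew[OF sk, of v v] by simp
  have uu: "bil m L u u = 0" using bil_skew[OF sk, of u u] by simp
  have V1: "mut_var m B d h i = qmult m L (Vfac m B dt d h i 1) (qX v)"
  proof -
    have "qmult m L (Vfac m B dt d h i 1) (qX v) = (\<Sum>l\<in>{0..D}. Poly_Mapping.single (vadd (vsmult (int l) \<beta>) v)
      (tpow ((2 * int 1 - 1) * int l * c) * h i l * 1 * tpow (bil m L (vsmult (int l) \<beta>) v)))"
      unfolding VfS qmult_sum_left qX_def qmult_single_single ..
    also have "\<dots> = (\<Sum>l\<in>{0..D}. Poly_Mapping.single (vadd (vsmult (int l) \<beta>) v) (h i l))"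
    proof (rule sum.cong[OF refl])
      fix l
      have "tpow ((2 * int 1 - 1) * int l * c) * h i l * 1 * tpow (bil m L (vsmult (int l) \<beta>) v)
          = h i l * (tpow (int l * c) * tpow (- (int l * c)))"
        by (simp add: bil_smult_left bv mult_ac)
      also have "\<dots> = h i l" by (simp add: tpow_add tpow_0)
      finally show "Poly_Mapping.single (vadd (vsmult (int l) \<beta>) v)
        (tpow ((2 * int 1 - 1) * int l * c) * h i l * 1 * tpow (bil m L (vsmult (int l) \<beta>) v))
        = Poly_Mapping.single (vadd (vsmult (int l) \<beta>) v) (h i l)" by (rule arg_cong)
    qed
    also have "\<dots> = mut_var m B d h i"
      unfolding mutS
    proof (rule sum.cong[OF refl])
      fix l assume l: "l \<in> {0..D}"
      have "vadd (vsmult (int l) \<beta>) v = vsub (vadd (vsmult (int l) (vpos \<beta>)) (vsmult (int (D - l)) (vpos (vneg \<beta>)))) (unitv i)"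
      proof
        fix k
        have "int l * max (\<beta> k) 0 + (int D - int l) * max (- \<beta> k) 0 = int l * \<beta> k + max (- (int D * \<beta> k)) 0"
          by (rule maxV) (use l in auto)
        then show "vadd (vsmult (int l) \<beta>) v k = vsub (vadd (vsmult (int l) (vpos \<beta>)) (vsmult (int (D - l)) (vpos (vneg \<beta>)))) (unitv i) k"
          using l by (simp add: v_def colb vadd_def vsub_def vsmult_def vpos_def vneg_def of_nat_diff)
      qed
      then show "Poly_Mapping.single (vadd (vsmult (int l) \<beta>) v) (h i l) = Poly_Mapping.single
      (vsub (vadd (vsmult (int l) (vpos \<beta>)) (vsmult (int (D - l)) (vpos (vneg \<beta>)))) (unitv i)) (h i l)" by simp
    qed
    finally show ?thesis by simp
  qed
  have bvb: "bil m L v \<beta> = c" using bil_skew[OF sk, of v \<beta>] bv by simp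
  have V2: "\<And>s. qmult m L (qX (vsmult (int s) v)) (Vfac m B dt d h i 1)
      = qmult m L (Vfac m B dt d h i (Suc s)) (qX (vsmult (int s) v))"
  proof -
    fix s
    show "qmult m L (qX (vsmult (int s) v)) (Vfac m B dt d h i 1)
      = qmult m L (Vfac m B dt d h i (Suc s)) (qX (vsmult (int s) v))"
      unfolding VfS qmult_sum_left qmult_sum_right qX_def qmult_single_single
    proof (rule sum.cong[OF refl])
      fix l
      have ex: "(2 * int 1 - 1) * int l * c + int s * (int l * c) = (2 * int (Suc s) - 1) * int l * c + int l * (int s * - c)"
        by (simp add: algebra_simps)
      have "1 * (tpow ((2 * int 1 - 1) * int l * c) * h i l) * tpow (bil m L (vsmult (int s) v) (vsmult (int l) \<beta>))
         = h i l * tpow ((2 * int 1 - 1) * int l * c + int s * (int l * c))"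
        by (simp add: bil_smult_left bil_smult_right bvb tpow_add[symmetric] mult_ac)
      also have "\<dots> = h i l * tpow ((2 * int (Suc s) - 1) * int l * c + int l * (int s * - c))"
        by (simp only: ex)
      also have "\<dots> = h i l * (tpow ((2 * int (Suc s) - 1) * int l * c) * tpow (int l * (int s * - c)))"
        by (simp only: tpow_add)
      also have "\<dots> = tpow ((2 * int (Suc s) - 1) * int l * c) * h i l * 1 * tpow (bil m L (vsmult (int l) \<beta>) (vsmult (int s) v))"
        by (simp add: bil_smult_left bil_smult_right bv mult_ac)
      finally show "Poly_Mapping.single (vadd (vsmult (int s) v) (vsmult (int l) \<beta>))
          (1 * (tpow ((2 * int 1 - 1) * int l * c) * h i l) * tpow (bil m L (vsmult (int s) v) (vsmult (int l) \<beta>)))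
        = Poly_Mapping.single (vadd (vsmult (int l) \<beta>) (vsmult (int s) v))
          (tpow ((2 * int (Suc s) - 1) * int l * c) * h i l * 1 * tpow (bil m L (vsmult (int l) \<beta>) (vsmult (int s) v)))"
        by (simp only: vadd_comm[of "vsmult (int s) v" "vsmult (int l) \<beta>"])
    qed
  qed
  have W1: "mut_var m B d h i = qmult m L (Wfac m B dt d h i 1) (qX u)"
  proof -
    have "qmult m L (Wfac m B dt d h i 1) (qX u) = (\<Sum>l\<in>{0..D}. Poly_Mapping.single (vadd (vsmult (- int l) \<beta>) u)
      (tpow ((1 - 2 * int 1) * int l * c) * h i l * 1 * tpow (bil m L (vsmult (- int l) \<beta>) u)))"
      unfolding WfS qmult_sum_left qX_def qmult_single_single ..
    also have "\<dots> = (\<Sum>l\<in>{0..D}. Poly_Mapping.single (vadd (vsmult (- int l) \<beta>) u) (h i l))"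
    proof (rule sum.cong[OF refl])
      fix l
      have "tpow ((1 - 2 * int 1) * int l * c) * h i l * 1 * tpow (bil m L (vsmult (- int l) \<beta>) u)
          = h i l * (tpow (- (int l * c)) * tpow (int l * c))"
        by (simp add: bil_smult_left bu mult_ac)
      also have "\<dots> = h i l" by (simp add: tpow_add tpow_0)
      finally show "Poly_Mapping.single (vadd (vsmult (- int l) \<beta>) u)
        (tpow ((1 - 2 * int 1) * int l * c) * h i l * 1 * tpow (bil m L (vsmult (- int l) \<beta>) u))
        = Poly_Mapping.single (vadd (vsmult (- int l) \<beta>) u) (h i l)" by (rule arg_cong)
    qed
    also have "\<dots> = (\<Sum>l\<in>{0..D}. Poly_Mapping.single
      (vsub (vadd (vsmult (int (D + 0 - l)) (vpos \<beta>)) (vsmult (int (D - (D + 0 - l))) (vpos (vneg \<beta>)))) (unitv i)) (h i (D + 0 - l)))"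
    proof (rule sum.cong[OF refl])
      fix l assume l: "l \<in> {0..D}"
      have hl: "h i l = h i (d i - l)" using hsym l unfolding D_def by (rule bspec)
      have hh: "h i (D + 0 - l) = h i l" unfolding D_def add_0_right by (rule hl[symmetric])
      have "vadd (vsmult (- int l) \<beta>) u = vsub (vadd (vsmult (int (D + 0 - l)) (vpos \<beta>)) (vsmult (int (D - (D + 0 - l))) (vpos (vneg \<beta>)))) (unitv i)"
      proof
        fix k
        have "(int D - int l) * max (\<beta> k) 0 + int l * max (- \<beta> k) 0 = - int l * \<beta> k + max (int D * \<beta> k) 0"
          by (rule maxW) (use l in auto)
        then show "vadd (vsmult (- int l) \<beta>) u k = vsub (vadd (vsmult (int (D + 0 - l)) (vpos \<beta>)) (vsmult (int (D - (D + 0 - l))) (vpos (vneg \<beta>)))) (unitv i) k"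
          using l by (simp add: u_def colb vadd_def vsub_def vsmult_def vpos_def vneg_def of_nat_diff)
      qed
      then show "Poly_Mapping.single (vadd (vsmult (- int l) \<beta>) u) (h i l) = Poly_Mapping.single
      (vsub (vadd (vsmult (int (D + 0 - l)) (vpos \<beta>)) (vsmult (int (D - (D + 0 - l))) (vpos (vneg \<beta>)))) (unitv i)) (h i (D + 0 - l))"
        by (simp only: hh)
    qed
    also have "\<dots> = mut_var m B d h i"
      unfolding mutS by (rule sum.atLeastAtMost_rev[symmetric])
    finally show ?thesis by simp
  qed
  have bub: "bil m L u \<beta> = c" using bil_skew[OF sk, of u \<beta>] bu by simp
  have W2: "\<And>s. qmult m L (qX (vsmult (int s) u)) (Wfac m B dt d h i 1)
      = qmult m L (Wfac m B dt d h i (Suc s)) (qX (vsmult (int s) u))"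
  proof -
    fix s
    show "qmult m L (qX (vsmult (int s) u)) (Wfac m B dt d h i 1)
      = qmult m L (Wfac m B dt d h i (Suc s)) (qX (vsmult (int s) u))"
      unfolding WfS qmult_sum_left qmult_sum_right qX_def qmult_single_single
    proof (rule sum.cong[OF refl])
      fix l
      have ex: "(1 - 2 * int 1) * int l * c + int s * (- int l * c) = (1 - 2 * int (Suc s)) * int l * c + - int l * (int s * - c)"
        by (simp add: algebra_simps)
      have "1 * (tpow ((1 - 2 * int 1) * int l * c) * h i l) * tpow (bil m L (vsmult (int s) u) (vsmult (- int l) \<beta>))
         = h i l * (tpow ((1 - 2 * int 1) * int l * c) * tpow (int s * (- int l * c)))"
        by (simp add: bil_smult_left bil_smult_right bub mult_ac)
      also have "\<dots> = h i l * tpow ((1 - 2 * int 1) * int l * c + int s * (- int l * c))"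
        by (simp only: tpow_add)
      also have "\<dots> = h i l * tpow ((1 - 2 * int (Suc s)) * int l * c + - int l * (int s * - c))"
        by (simp only: ex)
      also have "\<dots> = h i l * (tpow ((1 - 2 * int (Suc s)) * int l * c) * tpow (- int l * (int s * - c)))"
        by (simp only: tpow_add)
      also have "\<dots> = tpow ((1 - 2 * int (Suc s)) * int l * c) * h i l * 1 * tpow (bil m L (vsmult (- int l) \<beta>) (vsmult (int s) u))"
        by (simp add: bil_smult_left bil_smult_right bu mult_ac)
      finally show "Poly_Mapping.single (vadd (vsmult (int s) u) (vsmult (- int l) \<beta>))
          (1 * (tpow ((1 - 2 * int 1) * int l * c) * h i l) * tpow (bil m L (vsmult (int s) u) (vsmult (- int l) \<beta>)))
        = Poly_Mapping.single (vadd (vsmult (- int l) \<beta>) (vsmult (int s) u))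
          (tpow ((1 - 2 * int (Suc s)) * int l * c) * h i l * 1 * tpow (bil m L (vsmult (- int l) \<beta>) (vsmult (int s) u)))"
        by (simp only: vadd_comm[of "vsmult (int s) u" "vsmult (- int l) \<beta>"])
    qed
  qed
  have ev: "vsub (vsmult (int s) (vpos (vneg (col m B i)))) (vsmult (int s) (unitv i)) = vsmult (int s) v"
    by (simp add: v_def b_def vsub_def vsmult_def algebra_simps)
  have eu: "vsub (vsmult (int s) (vpos (col m B i))) (vsmult (int s) (unitv i)) = vsmult (int s) u"
    by (simp add: u_def b_def vsub_def vsmult_def algebra_simps)
  show ?thesis
    unfolding ev eu Vs_def Ws_def
    using qpow_general[OF V1 V2 vv] qpow_general[OF W1 W2 uu] by blast
qed

end
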